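(* Let $P$ be a planar convex polygon with vertices $P_1,\dots,P_{2n}$ (indices modulo $2n$) having parallel opposite sides, i.e. the segment $P_iP_{i+1}$ is parallel to $P_{i+n}P_{i+n+1}$ for $1\le i\le n$. Fix a point $Z$ and a number $a>0$, and let $U$ be the polygon with vertices $$U_i=Z+\frac{1}{2a}\left(P_i-P_{i+n}\right),\qquad 1\le i\le 2n.$$ Then $U$ is convex, symmetric with respect to $Z$, and $U_{i+1}-U_i\parallel P_{i+1}-P_i$ and $U_i-Z\parallel P_i-P_{i+n}$ for $1\le i\le n$. Moreover, $U$ is the unique polygon $\{U_1,\dots,U_{2n}\}$ with the given first vertex $U_1=Z+\frac1{2a}(P_1-P_{1+n})$ having these properties. *)

theory Defs
  imports "HOL-Analysis.Analysis"
begin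

text \<open>Planar points are elements of real^2.  A polygon with m vertices is given by
a map V :: nat => real^2, where only V 0, ..., V (m-1) matter and indices are
read modulo m (0-based indexing: paper's P_i is our P (i-1)).\<close>

definition cross2 :: "real^2 \<Rightarrow> real^2 \<Rightarrow> real" where
  "cross2 u v = u$1 * v$2 - u$2 * v$1"

definition convex_polygon :: "nat \<Rightarrow> (nat \<Rightarrow> real^2) \<Rightarrow> bool" where
  "convex_polygon m V \<longleftrightarrow> 3 \<le> m \<and>
     (\<exists>s\<in>{-1, 1::real}. \<forall>i<m. \<forall>j<m. j \<noteq> i \<and> j \<noteq> Suc i mod m \<longrightarrow>
        s * cross2 (V (Suc i mod m) - V i) (V j - V i) > 0)"

definition parallel :: "real^2 \<Rightarrow> real^2 \<Rightarrow> bool" where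
  "parallel u v \<longleftrightarrow> collinear {0, u, v}"

definition symmetric_wrt :: "nat \<Rightarrow> (nat \<Rightarrow> real^2) \<Rightarrow> real^2 \<Rightarrow> bool" where
  "symmetric_wrt m V Z \<longleftrightarrow> (\<lambda>x. 2 *\<^sub>R Z - x) ` (V ` {..<m}) = V ` {..<m}"

end

theory Submission imports Defs begin
lemma cross2_simps:
  "cross2 (u + v) w = cross2 u w + cross2 v w"
  "cross2 (u - v) w = cross2 u w - cross2 v w"
  "cross2 w (u + v) = cross2 w u + cross2 w v"
  "cross2 w (u - v) = cross2 w u - cross2 w v"
  "cross2 (k *\<^sub>R u) w = k * cross2 u w"
  "cross2 w (k *\<^sub>R u) = k * cross2 w u"
  "cross2 (- u) w = - cross2 u w"
  "cross2 w (- u) = - cross2 w u"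
  "cross2 u u = 0"
  "cross2 0 w = 0" "cross2 w 0 = 0"
  by (auto simp: cross2_def algebra_simps)

lemma cross2_antisym: "cross2 u v = - cross2 v u"
  by (simp add: cross2_def)

lemma vec2_eqI: "(x::real^2)$1 = y$1 \<Longrightarrow> x$2 = y$2 \<Longrightarrow> x = y"
  by (simp add: vec_eq_iff forall_2)

lemma cross2_zero_mult: assumes "cross2 u v = 0" "u \<noteq> 0" shows "\<exists>c. v = c *\<^sub>R u"
proof (cases "u$1 = 0")
  case True
  then have "u$2 \<noteq> 0" using assms(2) by (metis vec2_eqI zero_index)
  moreover have "v$1 = 0" using assms(1) True \<open>u$2 \<noteq> 0\<close> by (simp add: cross2_def)
  ultimately show ?thesis using True \<open>u$2 \<noteq> 0\<close>
    by (intro exI[of _ "v$2 / u$2"] vec2_eqI) auto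
next
  case False
  have "u$1 * v$2 = u$2 * v$1" using assms(1) by (simp add: cross2_def)
  then show ?thesis using False
    by (intro exI[of _ "v$1 / u$1"] vec2_eqI) (auto simp: field_simps)
qed

lemma parallel_iff: "parallel u v \<longleftrightarrow> cross2 u v = 0"
proof
  assume "parallel u v"
  then show "cross2 u v = 0" unfolding parallel_def collinear_lemma
    by (auto simp: cross2_simps)
next
  assume h: "cross2 u v = 0"
  show "parallel u v" unfolding parallel_def collinear_lemma
    using cross2_zero_mult[OF h] by blast
qed

lemma cross2_unique: assumes "cross2 w u = 0" "cross2 w v = 0" "cross2 u v \<noteq> 0"
  shows "w = 0"
proof -
  have a: "w$1 * (u$1* v$2 - u$2* v$1) = u$1* (w$1* v$2 - w$2* v$1) - v$1* (w$1* u$2 - w$2* u$1)"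
    by (simp add: algebra_simps)
  have b: "w$2 * (u$1* v$2 - u$2* v$1) = u$2* (w$1* v$2 - w$2* v$1) - v$2* (w$1* u$2 - w$2* u$1)"
    by (simp add: algebra_simps)
  from assms have "w$1 = 0" "w$2 = 0" using a b by (auto simp: cross2_def)
  then show ?thesis by (intro vec2_eqI) auto
qed

lemma convex_polygon_ne: assumes "convex_polygon m W" "i < m"
  shows "W (Suc i mod m) \<noteq> W i"
proof
  assume h: "W (Suc i mod m) = W i"
  from assms(1) obtain s where "\<forall>i<m. \<forall>j<m. j \<noteq> i \<and> j \<noteq> Suc i mod m \<longrightarrow>
        s * cross2 (W (Suc i mod m) - W i) (W j - W i) > 0" and m3: "3 \<le> m"
    unfolding convex_polygon_def by blast
  then have *: "\<And>j. j<m \<Longrightarrow> j \<noteq> i \<Longrightarrow> j \<noteq> Suc i mod m \<Longrightarrow> False"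
  proof -
    fix j assume "j<m" "j \<noteq> i" "j \<noteq> Suc i mod m"
    then have "s * cross2 (W (Suc i mod m) - W i) (W j - W i) > 0"
      using \<open>\<forall>i<m. _\<close> assms(2) by blast
    then show False using h by (simp add: cross2_def)
  qed
  have "\<exists>j<m. j \<noteq> i \<and> j \<noteq> Suc i mod m"
  proof -
    have "\<exists>j\<in>{0,1,2::nat}. j \<noteq> i \<and> j \<noteq> Suc i mod m" by auto
    then show ?thesis using m3 by force
  qed
  then show False using * by blast
qed

lemma convex_polygon_inj: assumes "convex_polygon m W" shows "inj_on W {..<m}"
proof (rule inj_onI)
  fix i j assume ij: "i \<in> {..<m}" "j \<in> {..<m}" "W i = W j"
  show "i = j"
  proof (rule ccontr)
    assume ne: "i \<noteq> j"
    from assms obtain s where s: "\<forall>i<m. \<forall>j<m. j \<noteq> i \<and> j \<noteq> Suc i mod m \<longrightarrow>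
        s * cross2 (W (Suc i mod m) - W i) (W j - W i) > 0"
      unfolding convex_polygon_def by blast
    show False
    proof (cases "j = Suc i mod m")
      case True
      then show ?thesis using convex_polygon_ne[OF assms, of i] ij by auto
    next
      case False
      then have "s * cross2 (W (Suc i mod m) - W i) (W j - W i) > 0"
        using s ij ne by blast
      then show ?thesis using ij by (simp add: cross2_def)
    qed
  qed
qed

theorem lemma2p1:
  fixes P :: "nat \<Rightarrow> real^2" and n :: nat and Z :: "real^2" and a :: real
  assumes convP: "convex_polygon (2*n) P"
    and parP: "\<forall>i<n. parallel (P (Suc i) - P i) (P ((i + n + 1) mod (2*n)) - P (i + n))"
    and a_pos: "a > 0"
  defines "U \<equiv> (\<lambda>i. Z + (1 / (2*a)) *\<^sub>R (P i - P ((i + n) mod (2*n))))"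
  shows "convex_polygon (2*n) U
       \<and> symmetric_wrt (2*n) U Z
       \<and> (\<forall>i<n. parallel (U (Suc i) - U i) (P (Suc i) - P i))
       \<and> (\<forall>i<n. parallel (U i - Z) (P i - P (i + n)))
       \<and> (\<forall>V :: nat \<Rightarrow> real^2.
            V 0 = U 0 \<and> convex_polygon (2*n) V \<and> symmetric_wrt (2*n) V Z
            \<and> (\<forall>i<n. parallel (V (Suc i) - V i) (P (Suc i) - P i))
            \<and> (\<forall>i<n. parallel (V i - Z) (P i - P (i + n)))
            \<longrightarrow> (\<forall>i<2*n. V i = U i))"
proof -
  define m where "m = 2*n"
  obtain s where s: "s \<in> {-1,1}" and sP: "\<forall>i<m. \<forall>j<m. j \<noteq> i \<and> j \<noteq> Suc i mod m \<longrightarrow>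
        s * cross2 (P (Suc i mod m) - P i) (P j - P i) > 0"
    using convP unfolding convex_polygon_def m_def by blast
  have sPi: "s * cross2 (P (Suc i mod m) - P i) (P j - P i) > 0"
    if "i<m" "j<m" "j \<noteq> i" "j \<noteq> Suc i mod m" for i j using sP that by blast
  have n2: "n \<ge> 2" using convP by (auto simp: convex_polygon_def)
  define N where "N i = (i+n) mod m" for i
  define e where "e i = P (Suc i mod m) - P i" for i
  define c where "c = 1/(2*a)"
  have cpos: "c > 0" using a_pos by (simp add: c_def)
  have Udef: "U i = Z + c *\<^sub>R (P i - P (N i))" for i by (simp add: U_def c_def N_def m_def)
  have Ncases: "N i = (if i < n then i+n else i-n)" if "i<m" for i
  proof (cases "i<n")
    case True then show ?thesis using that by (simp add: N_def m_def)
  next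
    case False
    then have "i + n = (i-n) + m" by (simp add: m_def)
    moreover have "i - n < m" using that by (simp add: m_def)
    ultimately show ?thesis using False unfolding N_def by (metis mod_add_self2 mod_less)
  qed
  have Sucm: "Suc i mod m = (if Suc i < m then Suc i else 0)" if "i<m" for i
  proof (cases "Suc i < m")
    case False then have "Suc i = m" using that by simp
    then show ?thesis by simp
  qed simp
  have Nlt: "N i < m" for i using n2 by (simp add: N_def m_def)
  have NN: "N (N i) = i" if "i<m" for i using that Ncases[OF that] Ncases[OF Nlt[of i]]
    by (auto simp: m_def)
  have Ninj: "i = j" if "i<m" "j<m" "N i = N j" for i j
    using NN that by metis
  have NSuc: "N (Suc i mod m) = Suc (N i) mod m" for i
    by (simp add: N_def mod_simps)
  have Nne1: "N i \<noteq> i" if "i<m" for i using that Ncases[OF that] n2 by (auto simp: m_def)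
  have Nne2: "N i \<noteq> Suc i mod m" if "i<m" for i
    using that Ncases[OF that] Sucm[OF that] n2 by (auto simp: m_def)
  have Nne3: "i \<noteq> Suc (N i) mod m" if "i<m" for i
    using that Ncases[OF that] Sucm[OF Nlt[of i]] n2 by (auto simp: m_def split: if_splits)
  have Pne: "e i \<noteq> 0" if "i<m" for i
    using convex_polygon_ne[OF convP[folded m_def] that] by (simp add: e_def)
  have par: "cross2 (e i) (e (N i)) = 0" if "i<m" for i
  proof (cases "i<n")
    case True
    then have "parallel (P (Suc i) - P i) (P ((i + n + 1) mod (2*n)) - P (i + n))" using parP by blast
    moreover have "Suc i mod m = Suc i" using True by (simp add: m_def)
    moreover have "N i = i + n" using Ncases[OF that] True by simp
    ultimately show ?thesis by (simp add: e_def parallel_iff m_def)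
  next
    case False
    define k where "k = i - n"
    have k: "k < n" "i = k + n" using False that by (auto simp: k_def m_def)
    then have "parallel (P (Suc k) - P k) (P ((k + n + 1) mod (2*n)) - P (k + n))" using parP by blast
    moreover have "Suc k mod m = Suc k" using k by (simp add: m_def)
    moreover have "N i = k" using Ncases[OF that] False k by simp
    ultimately have "cross2 (e (N i)) (e i) = 0" using k by (simp add: e_def parallel_iff m_def)
    then show ?thesis by (metis cross2_antisym neg_equal_0_iff_equal)
  qed
  have lam: "\<exists>l>0. e (N i) = (-l) *\<^sub>R e i" if im: "i<m" for i
  proof -
    obtain \<mu> where mu: "e (N i) = \<mu> *\<^sub>R e i" using cross2_zero_mult[OF par[OF im] Pne[OF im]] by blast
    have h1: "s * cross2 (e i) (P (N i) - P i) > 0"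
      using sPi[OF that Nlt Nne1[OF that] Nne2[OF that]] by (simp add: e_def)
    have h2: "s * cross2 (e (N i)) (P i - P (N i)) > 0"
      using sPi[OF Nlt that Nne1[OF that, symmetric] Nne3[OF that]] by (simp add: e_def)
    have "cross2 (e (N i)) (P i - P (N i)) = - \<mu> * cross2 (e i) (P (N i) - P i)"
      unfolding mu by (simp add: cross2_simps algebra_simps)
    then have "(-\<mu>) * (s * cross2 (e i) (P (N i) - P i)) > 0" using h2 by (simp add: algebra_simps)
    then have "-\<mu> > 0" using h1 by (rule zero_less_mult_pos2)
    then show ?thesis using mu by (intro exI[of _ "-\<mu>"]) auto
  qed
  then obtain L where L: "\<And>i. i<m \<Longrightarrow> L i > 0 \<and> e (N i) = (- L i) *\<^sub>R e i" by metis
  have Uedge: "U (Suc i mod m) - U i = (c * (1 + L i)) *\<^sub>R e i" if "i<m" for i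
  proof -
    have h: "U (Suc i mod m) - U i = c *\<^sub>R (e i - e (N i))"
      unfolding Udef e_def NSuc by (simp add: algebra_simps)
    have eN: "e (N i) = (- L i) *\<^sub>R e i" using L[OF that] by simp
    show ?thesis unfolding h eN by (simp add: algebra_simps)
  qed
  have Ucross: "s * cross2 (U (Suc i mod m) - U i) (U j - U i) > 0"
    if "i<m" "j<m" "j \<noteq> i" "j \<noteq> Suc i mod m" for i j
  proof -
    have Lp: "L i > 0" and eN: "e (N i) = (- L i) *\<^sub>R e i" using L[OF that(1)] by auto
    have dj: "U j - U i = c *\<^sub>R ((P j - P i) + (P (N i) - P (N j)))"
      by (simp add: Udef algebra_simps)
    have A: "s * cross2 (e i) (P j - P i) > 0" using sPi[OF that] by (simp add: e_def)
    have "N j \<noteq> N i" using Ninj that by blast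
    moreover have "N j \<noteq> Suc (N i) mod m"
      using Ninj[OF that(2) _ ] that(4) NSuc[of i] that(1) by (metis mod_less_divisor less_nat_zero_code neq0_conv)
    ultimately have "s * cross2 (e (N i)) (P (N j) - P (N i)) > 0"
      using sPi[OF Nlt Nlt] by (simp add: e_def)
    moreover have "cross2 (e (N i)) (P (N j) - P (N i)) = L i * cross2 (e i) (P (N i) - P (N j))"
      unfolding eN by (simp add: cross2_simps algebra_simps)
    ultimately have "L i * (s * cross2 (e i) (P (N i) - P (N j))) > 0" by (simp add: algebra_simps)
    then have B: "s * cross2 (e i) (P (N i) - P (N j)) > 0" using Lp by (rule zero_less_mult_pos)
    have "s * cross2 (U (Suc i mod m) - U i) (U j - U i)
        = (c * (1 + L i) * c) * (s * cross2 (e i) (P j - P i) + s * cross2 (e i) (P (N i) - P (N j)))"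
      unfolding Uedge[OF that(1)] dj by (simp add: cross2_simps algebra_simps)
    moreover have "c * (1 + L i) * c > 0" using cpos Lp by simp
    ultimately show ?thesis using A B by simp
  qed
  have convU: "convex_polygon m U"
    unfolding convex_polygon_def using s Ucross convP by (auto simp: convex_polygon_def m_def)
  have Urefl: "2 *\<^sub>R Z - U i = U (N i)" if "i<m" for i
    using NN[OF that] by (simp add: Udef algebra_simps scaleR_2)
  have symU: "symmetric_wrt m U Z"
    unfolding symmetric_wrt_def
  proof
    show "(\<lambda>x. 2 *\<^sub>R Z - x) ` U ` {..<m} \<subseteq> U ` {..<m}" using Urefl Nlt by auto
    show "U ` {..<m} \<subseteq> (\<lambda>x. 2 *\<^sub>R Z - x) ` U ` {..<m}"
    proof
      fix x assume "x \<in> U ` {..<m}"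
      then obtain i where i: "i<m" "x = U i" by auto
      then have "x = 2 *\<^sub>R Z - U (N i)" using Urefl[OF Nlt, of i] NN[OF i(1)] by simp
      then show "x \<in> (\<lambda>x. 2 *\<^sub>R Z - x) ` U ` {..<m}" using Nlt by blast
    qed
  qed
  have Upar1: "cross2 (U (Suc i) - U i) (P (Suc i) - P i) = 0" if "i<n" for i
  proof -
    have "Suc i mod m = Suc i" "i < m" using that by (auto simp: m_def)
    then have "U (Suc i) - U i = (c*(1+L i)) *\<^sub>R (P (Suc i) - P i)" using Uedge[of i] by (simp add: e_def)
    then show ?thesis by (simp only: cross2_simps(5,9) mult_zero_right)
  qed
  have Upar2: "cross2 (U i - Z) (P i - P (i + n)) = 0" if "i<n" for i
  proof -
    have "N i = i + n" using that Ncases[of i] by (simp add: m_def)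
    then have "U i - Z = c *\<^sub>R (P i - P (i + n))" by (simp add: Udef)
    then show ?thesis by (simp only: cross2_simps(5,9) mult_zero_right)
  qed
  have uniq: "\<forall>i<m. V i = U i" if V0: "V 0 = U 0" and convV: "convex_polygon m V"
    and symV: "symmetric_wrt m V Z"
    and parV1: "\<forall>i<n. parallel (V (Suc i) - V i) (P (Suc i) - P i)"
    and parV2: "\<forall>i<n. parallel (V i - Z) (P i - P (i + n))" for V
  proof -
    have ph1: "V k = U k" if "k<n" for k using that
    proof (induction k)
      case 0 then show ?case using V0 by simp
    next
      case (Suc k)
      then have IH: "V k = U k" by simp
      have k: "k < m" "Suc k mod m = Suc k" "Suc k + n < m" using Suc.prems by (auto simp: m_def)
      define w where "w = V (Suc k) - U (Suc k)"
      have c1: "cross2 w (e k) = 0"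
      proof -
        have "cross2 (V (Suc k) - V k) (e k) = 0" using parV1 Suc.prems k by (simp add: parallel_iff e_def)
        moreover have "cross2 (U (Suc k) - U k) (e k) = 0" using Upar1[of k] Suc.prems k by (simp add: e_def)
        moreover have "w = (V (Suc k) - V k) - (U (Suc k) - U k)" using IH by (simp add: w_def)
        ultimately show ?thesis by (simp only: cross2_simps(2); simp)
      qed
      have c2: "cross2 w (P (Suc k) - P (Suc k + n)) = 0"
      proof -
        have "cross2 (V (Suc k) - Z) (P (Suc k) - P (Suc k + n)) = 0" using parV2 Suc.prems unfolding parallel_iff by blast
        moreover have "cross2 (U (Suc k) - Z) (P (Suc k) - P (Suc k + n)) = 0" using Upar2 Suc.prems by blast
        moreover have "w = (V (Suc k) - Z) - (U (Suc k) - Z)" by (simp add: w_def)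
        ultimately show ?thesis by (simp only: cross2_simps(2); simp)
      qed
      have "s * cross2 (e k) (P (Suc k + n) - P k) > 0"
        using sPi[of k "Suc k + n"] k n2 by (simp add: e_def)
      moreover have "cross2 (e k) (P (Suc k) - P (Suc k + n)) = - cross2 (e k) (P (Suc k + n) - P k)"
        using k by (simp add: e_def cross2_def algebra_simps)
      ultimately have c3: "cross2 (e k) (P (Suc k) - P (Suc k + n)) \<noteq> 0" by auto
      show ?case using cross2_unique[OF c1 c2 c3] by (simp add: w_def)
    qed
    define S where "S = V ` {..<m}"
    have injU: "inj_on U {..<m}" using convex_polygon_inj[OF convU] .
    have injV: "inj_on V {..<m}" using convex_polygon_inj[OF convV] .
    have symS: "(\<lambda>x. 2 *\<^sub>R Z - x) ` S = S" using symV by (simp add: symmetric_wrt_def S_def)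
    have sub: "U ` {..<m} \<subseteq> S"
    proof
      fix x assume "x \<in> U ` {..<m}"
      then obtain i where i: "i<m" "x = U i" by auto
      show "x \<in> S"
      proof (cases "i<n")
        case True then show ?thesis using ph1 i unfolding S_def by (metis image_eqI lessThan_iff)
      next
        case False
        define k where "k = i - n"
        have k: "k<n" "k<m" "N k = i" using False i(1) Ncases[of k] by (auto simp: k_def m_def)
        have "x = 2 *\<^sub>R Z - V k" using Urefl[OF k(2)] k i ph1[OF k(1)] by simp
        moreover have "V k \<in> S" using k by (simp add: S_def)
        ultimately show ?thesis using symS by blast
      qed
    qed
    have SU: "S = U ` {..<m}"
    proof -
      have "card (U ` {..<m}) = m" using injU by (simp add: card_image)
      moreover have "card S = m" using injV by (simp add: card_image S_def)
      ultimately show ?thesis using sub card_subset_eq[of S "U ` {..<m}"] unfolding S_def by simp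
    qed
    obtain t where t: "t \<in> {-1,1}" and tV: "\<forall>i<m. \<forall>j<m. j \<noteq> i \<and> j \<noteq> Suc i mod m \<longrightarrow>
        t * cross2 (V (Suc i mod m) - V i) (V j - V i) > 0"
      using convV unfolding convex_polygon_def by blast
    have tVi: "t * cross2 (V (Suc i mod m) - V i) (V j - V i) > 0"
      if "i<m" "j<m" "j \<noteq> i" "j \<noteq> Suc i mod m" for i j using tV that by blast
    have m4: "m \<ge> 4" "Suc 0 mod m = 1" using n2 by (auto simp: m_def)
    have ts: "t = s"
    proof -
      have "U 2 \<in> S" using SU m4 by auto
      then obtain j where j: "j<m" "V j = U 2" unfolding S_def by auto
      have V1: "V 1 = U 1" using ph1[of 1] n2 by simp
      have "U 2 \<noteq> U 0" "U 2 \<noteq> U 1" using inj_onD[OF injU, of 2 0] inj_onD[OF injU, of 2 1] m4 by auto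
      then have "j \<noteq> 0" "j \<noteq> 1" using j V0 V1 by (metis One_nat_def)+
      then have "t * cross2 (U 1 - U 0) (U 2 - U 0) > 0" using tVi[of 0 j] j m4 V0 V1 by simp
      moreover have "s * cross2 (U 1 - U 0) (U 2 - U 0) > 0" using Ucross[of 0 2] m4 by simp
      ultimately show ?thesis using s t by (auto simp: zero_less_mult_iff)
    qed
    have ph2: "\<forall>j\<le>k. V j = U j" if "k<m" for k using that
    proof (induction k)
      case 0 then show ?case using V0 by simp
    next
      case (Suc k)
      then have IH: "\<And>j. j \<le> k \<Longrightarrow> V j = U j" by simp
      have k: "k<m" "Suc k mod m = Suc k" using Suc.prems by auto
      obtain l where l: "l<m" "V (Suc k) = U l" using SU Suc.prems unfolding S_def by blast
      have "l = Suc k"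
      proof (rule ccontr)
        assume lne: "l \<noteq> Suc k"
        have lk: "l > k"
        proof (rule ccontr)
          assume "\<not> l > k"
          then have "V (Suc k) = V l" using IH[of l] l by simp
          then show False using inj_onD[OF injV] l Suc.prems \<open>\<not> l > k\<close> by force
        qed
        obtain j where j: "j<m" "V j = U (Suc k)" using SU Suc.prems unfolding S_def by force
        have "U k \<noteq> U (Suc k)" "U l \<noteq> U (Suc k)" using inj_onD[OF injU, of k "Suc k"] inj_onD[OF injU, of l "Suc k"] lne l Suc.prems k by auto
        then have "j \<noteq> k" "j \<noteq> Suc k" using j IH[of k] l by auto
        then have "t * cross2 (V (Suc k) - V k) (V j - V k) > 0" using tVi[of k j] j k by simp
        then have "s * cross2 (U l - U k) (U (Suc k) - U k) > 0" using ts j l IH[of k] by simp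
        moreover have "s * cross2 (U (Suc k) - U k) (U l - U k) > 0"
          using Ucross[of k l] k l lk lne by simp
        ultimately show False by (metis cross2_antisym mult_minus_right neg_less_0_iff_less less_asym)
      qed
      then show ?case using IH l by (metis le_Suc_eq)
    qed
    show ?thesis using ph2 by blast
  qed
  have p1: "\<forall>i<n. parallel (U (Suc i) - U i) (P (Suc i) - P i)" using Upar1 by (simp add: parallel_iff)
  have p2: "\<forall>i<n. parallel (U i - Z) (P i - P (i + n))" using Upar2 by (simp add: parallel_iff)
  have u: "\<forall>V :: nat \<Rightarrow> real^2.
            V 0 = U 0 \<and> convex_polygon m V \<and> symmetric_wrt m V Z
            \<and> (\<forall>i<n. parallel (V (Suc i) - V i) (P (Suc i) - P i))
            \<and> (\<forall>i<n. parallel (V i - Z) (P i - P (i + n)))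
            \<longrightarrow> (\<forall>i<m. V i = U i)" using uniq by blast
  show ?thesis
    using convU symU p1 p2 u unfolding m_def by blast
qed

end
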